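(* Let $n$ be such that $\theta^n=\mathrm{id}$, let $a\in\mathbb F^*$ with $\theta(a)=a$ (so $x^n-a$ is central in $\mathcal R$ and $\mathcal S_a$ is a ring), and suppose $x^n-a=hg$ with $g,h\in\mathcal R$. Then: (1) $M^\theta_a$ induces an injective ring homomorphism $\mathcal S_a\to\mathbb F^{n\times n}$; (2) $x^n-a=gh$; (3) $M^\theta_a(\overline g)M^\theta_a(\overline h)=M^\theta_a(\overline h)M^\theta_a(\overline g)=0$; (4) the maps $\psi_h:\mathcal S_a\to\mathcal S_a$, $\overline f\mapsto\overline{fh}$ and $\psi_g:\mathcal S_a\to\mathcal S_a$, $\overline f\mapsto\overline{fg}$ are left $\mathcal R$-module homomorphisms with $\ker\psi_h=\mathcal R\overline g=\mathrm{ann}_l(\overline h\,\mathcal S_a)$ and $\ker\psi_g=\mathcal R\overline h=\mathrm{ann}_l(\overline g\,\mathcal S_a)$; (5) the maps $\psi'_h:\overline f\mapsto\overline{hf}$ and $\psi'_g:\overline f\mapsto\overline{gf}$ on $\mathcal S_a$ are right $\mathcal R$-module homomorphisms with $\ker\psi'_h=\overline g\,\mathcal S_a=\mathrm{ann}_r(\mathcal S_a\overline h)$ and $\ker\psi'_g=\overline h\,\mathcal S_a=\mathrm{ann}_r(\mathcal S_a\overline g)$; (6) if $\mathcal C=\mathfrak v_a(\mathcal R\overline g)$ and $h=\sum_{i=0}^kh_ix^i$ with $h_k\ne0$, then $\mathcal C^\perp=\mathfrak v_{a^{-1}}(\mathcal R\overline{\rho_l(h)})$, where $\rho_l(h)=h_k+\theta(h_{k-1})x+\dots+\theta^k(h_0)x^k$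 and the coset is taken in $\mathcal R/\mathcal R(x^n-a^{-1})$.
   Context: $\mathbb F$ is a finite field, $\theta\in\mathrm{Aut}(\mathbb F)$, $\mathcal R=\mathbb F[x;\theta]$ the skew polynomial ring (elements $\sum f_ix^i$ with left coefficients, multiplication determined by $xb=\theta(b)x$). For $e\in\mathbb F^*$, $\mathcal S_e=\mathcal R/\mathcal R(x^n-e)$, $\overline f$ the coset of $f$, $\mathcal R\overline f$ the left submodule generated by $\overline f$, $\overline f\,\mathcal S_a$ the right ideal of the ring $\mathcal S_a$ generated by $\overline f$; $\mathrm{ann}_l(X)=\{s\in\mathcal S_a: sX=0\}$ and $\mathrm{ann}_r(X)=\{s\in\mathcal S_a: Xs=0\}$. $\mathfrak v_e:\mathcal S_e\to\mathbb F^n$ is the inverse of $(c_0,\dots,c_{n-1})\mapsto\overline{\sum_{i=0}^{n-1}c_ix^i}$, and $M^\theta_a(\overline f)$ is the $n\times n$ matrix whose row with index $i$ ($0\le i\le n-1$) is $\mathfrak v_a(\overline{x^if})$. $\mathcal C^\perp$ is the dual code with respect to the standard bilinear form on $\mathbb F^n$. *)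

theory Defs
  imports "HOL-Computational_Algebra.Polynomial" "Jordan_Normal_Form.Matrix"
begin

definition field_aut :: "('a::field \<Rightarrow> 'a) \<Rightarrow> bool" where
  "field_aut \<theta> \<longleftrightarrow> bij \<theta> \<and> (\<forall>x y. \<theta> (x + y) = \<theta> x + \<theta> y)
      \<and> (\<forall>x y. \<theta> (x * y) = \<theta> x * \<theta> y) \<and> \<theta> 1 = 1"

text \<open>Skew polynomials F[x;theta] are represented by ordinary polynomials (coefficient
  sequences, coefficients written on the left); addition is the usual one and the
  multiplication is determined by x b = theta(b) x:
  (sum f_i x^i)(sum g_j x^j) = sum f_i theta^i(g_j) x^(i+j).\<close>
definition skew_mult :: "('a::field \<Rightarrow> 'a) \<Rightarrow> 'a poly \<Rightarrow> 'a poly \<Rightarrow> 'a poly" where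
  "skew_mult \<theta> f g = (\<Sum>i\<le>degree f. monom (coeff f i) i * map_poly (\<theta> ^^ i) g)"

definition xn_minus :: "nat \<Rightarrow> 'a::field \<Rightarrow> 'a poly" where
  "xn_minus n e = monom 1 n - [:e:]"

definition skew_cong :: "('a::field \<Rightarrow> 'a) \<Rightarrow> nat \<Rightarrow> 'a \<Rightarrow> 'a poly \<Rightarrow> 'a poly \<Rightarrow> bool" where
  "skew_cong \<theta> n e f g \<longleftrightarrow> (\<exists>q. f - g = skew_mult \<theta> q (xn_minus n e))"

definition scls :: "('a::field \<Rightarrow> 'a) \<Rightarrow> nat \<Rightarrow> 'a \<Rightarrow> 'a poly \<Rightarrow> 'a poly set" where
  "scls \<theta> n e f = {g. skew_cong \<theta> n e f g}"

definition SS :: "('a::field \<Rightarrow> 'a) \<Rightarrow> nat \<Rightarrow> 'a \<Rightarrow> 'a poly set set" where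
  "SS \<theta> n e = range (scls \<theta> n e)"

definition srep :: "'a poly set \<Rightarrow> 'a poly" where
  "srep X = (SOME f. f \<in> X)"

text \<open>Operations on S_e via representatives: addition, ring multiplication (meaningful when
  x^n - e is central), left action of R, right action of R.\<close>
definition sadd :: "('a::field \<Rightarrow> 'a) \<Rightarrow> nat \<Rightarrow> 'a \<Rightarrow> 'a poly set \<Rightarrow> 'a poly set \<Rightarrow> 'a poly set" where
  "sadd \<theta> n e X Y = scls \<theta> n e (srep X + srep Y)"

definition smul :: "('a::field \<Rightarrow> 'a) \<Rightarrow> nat \<Rightarrow> 'a \<Rightarrow> 'a poly set \<Rightarrow> 'a poly set \<Rightarrow> 'a poly set" where
  "smul \<theta> n e X Y = scls \<theta> n e (skew_mult \<theta> (srep X) (srep Y))"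

definition sact :: "('a::field \<Rightarrow> 'a) \<Rightarrow> nat \<Rightarrow> 'a \<Rightarrow> 'a poly \<Rightarrow> 'a poly set \<Rightarrow> 'a poly set" where
  "sact \<theta> n e r X = scls \<theta> n e (skew_mult \<theta> r (srep X))"

definition sact_r :: "('a::field \<Rightarrow> 'a) \<Rightarrow> nat \<Rightarrow> 'a \<Rightarrow> 'a poly set \<Rightarrow> 'a poly \<Rightarrow> 'a poly set" where
  "sact_r \<theta> n e X r = scls \<theta> n e (skew_mult \<theta> (srep X) r)"

definition ann_l :: "('a::field \<Rightarrow> 'a) \<Rightarrow> nat \<Rightarrow> 'a \<Rightarrow> 'a poly set set \<Rightarrow> 'a poly set set" where
  "ann_l \<theta> n e X = {s \<in> SS \<theta> n e. \<forall>x\<in>X. smul \<theta> n e s x = scls \<theta> n e 0}"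

definition ann_r :: "('a::field \<Rightarrow> 'a) \<Rightarrow> nat \<Rightarrow> 'a \<Rightarrow> 'a poly set set \<Rightarrow> 'a poly set set" where
  "ann_r \<theta> n e X = {s \<in> SS \<theta> n e. \<forall>x\<in>X. smul \<theta> n e x s = scls \<theta> n e 0}"

definition sv :: "('a::field \<Rightarrow> 'a) \<Rightarrow> nat \<Rightarrow> 'a \<Rightarrow> 'a poly set \<Rightarrow> 'a vec" where
  "sv \<theta> n e X = (THE c. c \<in> carrier_vec n \<and> scls \<theta> n e (\<Sum>i<n. monom (c $ i) i) = X)"

definition Mmat :: "('a::field \<Rightarrow> 'a) \<Rightarrow> nat \<Rightarrow> 'a \<Rightarrow> 'a poly set \<Rightarrow> 'a mat" where
  "Mmat \<theta> n e X = mat n n (\<lambda>(i, j). sv \<theta> n e (sact \<theta> n e (monom 1 i) X) $ j)"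

definition rho_l :: "('a::field \<Rightarrow> 'a) \<Rightarrow> 'a poly \<Rightarrow> 'a poly" where
  "rho_l \<theta> h = (\<Sum>i\<le>degree h. monom ((\<theta> ^^ i) (coeff h (degree h - i))) i)"

definition dual_code :: "nat \<Rightarrow> 'a::field vec set \<Rightarrow> 'a vec set" where
  "dual_code n C = {y \<in> carrier_vec n. \<forall>c\<in>C. c \<bullet> y = 0}"

end

theory Submission
  imports Defs
begin


section \<open>Automorphism facts\<close>

lemma fa_add: "field_aut \<theta> \<Longrightarrow> \<theta> (x + y) = \<theta> x + \<theta> y" unfolding field_aut_def by blast
lemma fa_mult: "field_aut \<theta> \<Longrightarrow> \<theta> (x * y) = \<theta> x * \<theta> y" unfolding field_aut_def by blast
lemma fa_one: "field_aut \<theta> \<Longrightarrow> \<theta> 1 = 1" unfolding field_aut_def by blast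
lemma fa_inj: "field_aut \<theta> \<Longrightarrow> inj \<theta>" unfolding field_aut_def bij_def by blast
lemma fa_zero: "field_aut \<theta> \<Longrightarrow> \<theta> 0 = 0"
  using fa_add[of \<theta> 0 0] by (metis add.right_neutral add_left_cancel)

lemma fa_pow: "field_aut \<theta> \<Longrightarrow> field_aut (\<theta> ^^ i)"
proof (induction i)
  case 0 then show ?case by (simp add: field_aut_def bij_betw_def inj_on_def)
next
  case (Suc i)
  then have a: "field_aut (\<theta>^^i)" by simp
  show ?case unfolding field_aut_def using Suc.prems a
    by (auto simp: fa_add fa_mult fa_one intro!: bij_comp
         dest: fa_add[of "\<theta>^^i"] fa_mult[of "\<theta>^^i"] fa_one[of "\<theta>^^i"])
      (auto simp: field_aut_def)
qed

lemma fa_neg: "field_aut \<theta> \<Longrightarrow> \<theta> (- x) = - \<theta> x"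
  using fa_add[of \<theta> x "-x"] fa_zero[of \<theta>] by (metis neg_eq_iff_add_eq_0 add.right_inverse)
lemma fa_diff: "field_aut \<theta> \<Longrightarrow> \<theta> (x - y) = \<theta> x - \<theta> y"
  using fa_add[of \<theta> x "-y"] fa_neg[of \<theta> y] by simp
lemma fa_eq0: "field_aut \<theta> \<Longrightarrow> \<theta> x = 0 \<longleftrightarrow> x = 0"
  using fa_inj[of \<theta>] fa_zero[of \<theta>] by (metis injD)
lemma fa_sum: "field_aut \<theta> \<Longrightarrow> \<theta> (sum f A) = (\<Sum>x\<in>A. \<theta> (f x))"
  by (induction A rule: infinite_finite_induct) (auto simp: fa_zero fa_add)
lemma fa_inverse: "field_aut \<theta> \<Longrightarrow> \<theta> (inverse x) = inverse (\<theta> x)"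
proof (cases "x = 0")
  case True assume "field_aut \<theta>" then show ?thesis using True by (simp add: fa_zero)
next
  case False assume a: "field_aut \<theta>"
  have "\<theta> (inverse x) * \<theta> x = 1" using fa_mult[OF a, of "inverse x" x] fa_one[OF a] False by simp
  then show ?thesis using False fa_eq0[OF a] by (metis inverse_unique mult.commute)
qed

lemma funpow_fix: "\<theta> e = e \<Longrightarrow> (\<theta> ^^ i) e = e"
  by (induction i) auto

lemma funpow_add_app: "(\<theta> ^^ i) ((\<theta> ^^ j) x) = (\<theta> ^^ (i + j)) x"
  by (simp add: funpow_add)

section \<open>Skew multiplication\<close>

context
  fixes \<theta> :: "'a::field \<Rightarrow> 'a"
  assumes aut: "field_aut \<theta>"
begin

lemma th0[simp]: "(\<theta>^^i) 0 = 0" using fa_zero[OF fa_pow[OF aut]] .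
lemma th1[simp]: "(\<theta>^^i) 1 = 1" using fa_one[OF fa_pow[OF aut]] .
lemma thadd[simp]: "(\<theta>^^i) (x + y) = (\<theta>^^i) x + (\<theta>^^i) y" using fa_add[OF fa_pow[OF aut]] .
lemma thmult[simp]: "(\<theta>^^i) (x * y) = (\<theta>^^i) x * (\<theta>^^i) y" using fa_mult[OF fa_pow[OF aut]] .
lemma thneg[simp]: "(\<theta>^^i) (- x) = - (\<theta>^^i) x" using fa_neg[OF fa_pow[OF aut]] .
lemma thdiff[simp]: "(\<theta>^^i) (x - y) = (\<theta>^^i) x - (\<theta>^^i) y" using fa_diff[OF fa_pow[OF aut]] .
lemma theq0[simp]: "(\<theta>^^i) x = 0 \<longleftrightarrow> x = 0" using fa_eq0[OF fa_pow[OF aut]] .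
lemma thsum: "(\<theta>^^i) (sum f A) = (\<Sum>x\<in>A. (\<theta>^^i) (f x))" using fa_sum[OF fa_pow[OF aut]] .

lemma map_poly_th_add: "map_poly (\<theta>^^i) (p + q) = map_poly (\<theta>^^i) p + map_poly (\<theta>^^i) q"
  by (rule poly_eqI) (simp add: coeff_map_poly)
lemma map_poly_th_minus: "map_poly (\<theta>^^i) (- p) = - map_poly (\<theta>^^i) p"
  by (rule poly_eqI) (simp add: coeff_map_poly)
lemma map_poly_th_diff: "map_poly (\<theta>^^i) (p - q) = map_poly (\<theta>^^i) p - map_poly (\<theta>^^i) q"
  by (rule poly_eqI) (simp add: coeff_map_poly)
lemma map_poly_th_sum: "map_poly (\<theta>^^i) (sum f A) = (\<Sum>x\<in>A. map_poly (\<theta>^^i) (f x))"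
  by (rule poly_eqI) (simp add: coeff_map_poly coeff_sum thsum)
lemma map_poly_th_monom: "map_poly (\<theta>^^i) (monom c k) = monom ((\<theta>^^i) c) k"
  by (simp add: map_poly_monom)
lemma map_poly_th_const: "map_poly (\<theta>^^i) [:c:] = [:(\<theta>^^i) c:]"
  by (rule poly_eqI) (simp add: coeff_map_poly coeff_pCons split: nat.split)

abbreviation sm (infixl "\<star>" 70) where "f \<star> g \<equiv> skew_mult \<theta> f g"

lemma sm_gen: "degree f \<le> N \<Longrightarrow>
   f \<star> g = (\<Sum>i\<le>N. monom (coeff f i) i * map_poly (\<theta> ^^ i) g)"
proof -
  assume N: "degree f \<le> N"
  have "(\<Sum>i\<le>N. monom (coeff f i) i * map_poly (\<theta> ^^ i) g)
      = (\<Sum>i\<le>degree f. monom (coeff f i) i * map_poly (\<theta> ^^ i) g)"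
    by (rule sum.mono_neutral_right) (use N in \<open>auto simp: coeff_eq_0\<close>)
  then show ?thesis unfolding skew_mult_def by simp
qed

lemma sm_add_left: "(f + g) \<star> h = f \<star> h + g \<star> h"
proof -
  let ?N = "max (degree f) (degree g)"
  have "degree (f + g) \<le> ?N" by (rule degree_add_le) auto
  then show ?thesis
    by (simp add: sm_gen[of _ ?N] sum.distrib distrib_right add_monom[symmetric])
qed

lemma sm_add_right: "f \<star> (g + h) = f \<star> g + f \<star> h"
  unfolding skew_mult_def by (simp add: map_poly_th_add distrib_left sum.distrib)

lemma sm_zero_left[simp]: "0 \<star> f = 0"
  unfolding skew_mult_def by simp
lemma sm_zero_right[simp]: "f \<star> 0 = 0"
  unfolding skew_mult_def by simp

lemma sm_minus_left: "(- f) \<star> h = - (f \<star> h)"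
  using sm_add_left[of f "-f" h] by (metis neg_eq_iff_add_eq_0 add.right_inverse sm_zero_left)
lemma sm_minus_right: "f \<star> (- h) = - (f \<star> h)"
  using sm_add_right[of f h "-h"] by (metis neg_eq_iff_add_eq_0 add.right_inverse sm_zero_right)
lemma sm_diff_left: "(f - g) \<star> h = f \<star> h - g \<star> h"
  using sm_add_left[of f "-g" h] sm_minus_left[of g h] by simp
lemma sm_diff_right: "f \<star> (g - h) = f \<star> g - f \<star> h"
  using sm_add_right[of f g "-h"] sm_minus_right[of f h] by simp

lemma sm_sum_left: "(sum F A) \<star> h = (\<Sum>x\<in>A. F x \<star> h)"
  by (induction A rule: infinite_finite_induct) (auto simp: sm_add_left)
lemma sm_sum_right: "h \<star> (sum F A) = (\<Sum>x\<in>A. h \<star> F x)"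
  by (induction A rule: infinite_finite_induct) (auto simp: sm_add_right)

lemma sm_monom_left: "monom b i \<star> g = monom b i * map_poly (\<theta>^^i) g"
proof (cases "b = 0")
  case True then show ?thesis by simp
next
  case False
  have "monom b i \<star> g = (\<Sum>j\<le>i. monom (coeff (monom b i) j) j * map_poly (\<theta> ^^ j) g)"
    by (rule sm_gen) (simp add: degree_monom_le)
  also have "\<dots> = monom b i * map_poly (\<theta>^^i) g"
    by (subst sum.remove[of _ i]) (auto intro!: sum.neutral)
  finally show ?thesis .
qed

lemma sm_monom_monom: "monom b i \<star> monom c j = monom (b * (\<theta>^^i) c) (i + j)"
  by (simp add: sm_monom_left map_poly_th_monom mult_monom)

lemma sm_const_left: "[:c:] \<star> g = Polynomial.smult c g"
  using sm_monom_left[of c 0 g] by (simp add: monom_0 map_poly_idI)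

lemma coeff_map_th[simp]: "coeff (map_poly (\<theta>^^i) p) k = (\<theta>^^i) (coeff p k)"
  by (simp add: coeff_map_poly)

lemma sm_expand0: "f \<star> g = (\<Sum>i\<le>degree f. \<Sum>j\<le>degree g. monom (coeff f i) i \<star> monom (coeff g j) j)"
proof -
  have "f \<star> g = (\<Sum>i\<le>degree f. monom (coeff f i) i) \<star> g"
    by (simp add: poly_as_sum_of_monoms)
  also have "\<dots> = (\<Sum>i\<le>degree f. monom (coeff f i) i \<star> g)" by (rule sm_sum_left)
  also have "\<dots> = (\<Sum>i\<le>degree f. monom (coeff f i) i \<star> (\<Sum>j\<le>degree g. monom (coeff g j) j))"
    by (simp add: poly_as_sum_of_monoms)
  also have "\<dots> = (\<Sum>i\<le>degree f. \<Sum>j\<le>degree g. monom (coeff f i) i \<star> monom (coeff g j) j)"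
    by (simp add: sm_sum_right)
  finally show ?thesis .
qed

lemma sm_expand: "f \<star> g = (\<Sum>i\<le>degree f. \<Sum>j\<le>degree g. monom (coeff f i * (\<theta>^^i) (coeff g j)) (i + j))"
  by (subst sm_expand0) (simp add: sm_monom_monom)

lemma sm_assoc: "(f \<star> g) \<star> h = f \<star> (g \<star> h)"
proof -
  let ?F = "\<lambda>i. monom (coeff f i) i" and ?G = "\<lambda>j. monom (coeff g j) j"
    and ?H = "\<lambda>l. monom (coeff h l) l"
  have "(f \<star> g) \<star> h = (\<Sum>i\<le>degree f. \<Sum>j\<le>degree g. ?F i \<star> ?G j) \<star> h"
    by (subst sm_expand0) simp
  also have "\<dots> = (\<Sum>i\<le>degree f. \<Sum>j\<le>degree g. (?F i \<star> ?G j) \<star> h)"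
    by (simp add: sm_sum_left)
  also have "\<dots> = (\<Sum>i\<le>degree f. \<Sum>j\<le>degree g. (?F i \<star> ?G j) \<star> (\<Sum>l\<le>degree h. ?H l))"
    by (simp add: poly_as_sum_of_monoms)
  also have "\<dots> = (\<Sum>i\<le>degree f. \<Sum>j\<le>degree g. \<Sum>l\<le>degree h. (?F i \<star> ?G j) \<star> ?H l)"
    by (simp add: sm_sum_right)
  also have "\<dots> = (\<Sum>i\<le>degree f. \<Sum>j\<le>degree g. \<Sum>l\<le>degree h. ?F i \<star> (?G j \<star> ?H l))"
    by (simp add: sm_monom_monom funpow_add_app mult.assoc add_ac)
  also have "\<dots> = (\<Sum>i\<le>degree f. ?F i \<star> (\<Sum>j\<le>degree g. \<Sum>l\<le>degree h. ?G j \<star> ?H l))"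
    by (simp add: sm_sum_right)
  also have "\<dots> = (\<Sum>i\<le>degree f. ?F i \<star> (g \<star> h))"
    by (subst (2) sm_expand0) simp
  also have "\<dots> = f \<star> (g \<star> h)"
    by (simp add: sm_sum_left[symmetric] poly_as_sum_of_monoms)
  finally show ?thesis .
qed

lemma sm_one_left[simp]: "1 \<star> f = f"
  using sm_const_left[of 1 f] by (simp add: one_pCons)
lemma sm_one_right[simp]: "f \<star> 1 = f"
  unfolding skew_mult_def by (simp add: one_pCons map_poly_th_const
       mult.commute[of "monom _ _"] poly_as_sum_of_monoms flip: one_pCons)

lemma coeff_sm: "coeff (f \<star> g) k = (\<Sum>i\<le>degree f. if i \<le> k then coeff f i * (\<theta>^^i) (coeff g (k - i)) else 0)"
  unfolding skew_mult_def by (auto simp: coeff_sum coeff_monom_mult intro!: sum.cong)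

lemma coeff_sm_monom1: "coeff (monom 1 i \<star> g) t = (if i \<le> t then (\<theta>^^i) (coeff g (t - i)) else 0)"
  by (simp add: sm_monom_left coeff_monom_mult coeff_map_poly not_less)

lemma degree_sm_le: "degree (f \<star> g) \<le> degree f + degree g"
  unfolding skew_mult_def
  by (rule degree_sum_le) (auto intro!: order.trans[OF degree_mult_le] add_mono order.trans[OF degree_monom_le] simp: degree_map_poly)

lemma coeff_sm_top: "coeff (f \<star> g) (degree f + degree g) = lead_coeff f * (\<theta>^^(degree f)) (lead_coeff g)"
proof -
  have "coeff (f \<star> g) (degree f + degree g) =
     (\<Sum>i\<le>degree f. if i = degree f then coeff f i * (\<theta>^^i) (coeff g (degree g)) else 0)"
    unfolding coeff_sm
  proof (rule sum.cong[OF refl])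
    fix i assume "i \<in> {..degree f}"
    then have "i \<le> degree f" by simp
    then show "(if i \<le> degree f + degree g then coeff f i * (\<theta> ^^ i) (coeff g (degree f + degree g - i)) else 0) =
          (if i = degree f then coeff f i * (\<theta> ^^ i) (coeff g (degree g)) else 0)"
      by (auto simp: coeff_eq_0)
  qed
  then show ?thesis by simp
qed

lemma degree_sm: "f \<noteq> 0 \<Longrightarrow> g \<noteq> 0 \<Longrightarrow> degree (f \<star> g) = degree f + degree g"
  using coeff_sm_top[of f g] degree_sm_le[of f g]
  by (metis le_degree le_antisym leading_coeff_0_iff mult_eq_0_iff theq0)

lemma sm_nonzero: "f \<noteq> 0 \<Longrightarrow> g \<noteq> 0 \<Longrightarrow> f \<star> g \<noteq> 0"
  using coeff_sm_top[of f g] by (metis coeff_0 leading_coeff_0_iff mult_eq_0_iff theq0)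

lemma sm_eq0: "f \<star> g = 0 \<longleftrightarrow> f = 0 \<or> g = 0"
  using sm_nonzero by auto

lemma sm_cancel_left: "f \<noteq> 0 \<Longrightarrow> f \<star> g = f \<star> h \<Longrightarrow> g = h"
  using sm_diff_right[of f g h] sm_eq0[of f "g - h"] by simp
lemma sm_cancel_right: "f \<noteq> 0 \<Longrightarrow> g \<star> f = h \<star> f \<Longrightarrow> g = h"
  using sm_diff_left[of g h f] sm_eq0[of "g - h" f] by simp

lemma sm_smult_left: "Polynomial.smult c f \<star> g = Polynomial.smult c (f \<star> g)"
  by (metis sm_const_left sm_assoc)

lemma sm_monom_const: "monom b i \<star> [:c:] = monom (b * (\<theta>^^i) c) i"
  using sm_monom_monom[of b i c 0] by (simp add: monom_0)

end



definition sred :: "('a::field \<Rightarrow> 'a) \<Rightarrow> nat \<Rightarrow> 'a \<Rightarrow> 'a poly \<Rightarrow> 'a poly" where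
  "sred \<theta> n e f = (THE r. degree r < n \<and> skew_cong \<theta> n e f r)"

lemma degree_less_if_top0: "degree p \<le> d \<Longrightarrow> coeff p d = 0 \<Longrightarrow> 0 < d \<Longrightarrow> degree p < d"
  by (metis le_neq_implies_less leading_coeff_0_iff degree_0)

lemma sum_monom_lessThan: "degree p < n \<Longrightarrow> (\<Sum>i<n. monom (coeff p i) i) = p"
  by (rule poly_eqI) (auto simp: coeff_sum coeff_monom coeff_eq_0)

lemma coeff_sum_monom_lessThan: "coeff (\<Sum>i<n. monom (v i) i) k = (if k < n then v k else 0)"
  by (auto simp: coeff_sum coeff_monom)

lemma degree_sum_monom_lessThan: "0 < n \<Longrightarrow> degree (\<Sum>i<n. monom (v i) i) < n"
proof -
  assume n: "0 < n"
  have "degree (\<Sum>i<n. monom (v i) i) \<le> n - 1"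
    by (rule degree_sum_le) (use n in \<open>auto intro: order.trans[OF degree_monom_le]\<close>)
  then show ?thesis using n by linarith
qed

locale skewq =
  fixes \<theta> :: "'a::field \<Rightarrow> 'a" and n :: nat and e :: 'a
  assumes aut: "field_aut \<theta>" and npos: "0 < n" and nid: "\<theta> ^^ n = id" and efix: "\<theta> e = e"
begin

abbreviation sm (infixl "\<star>" 70) where "f \<star> g \<equiv> skew_mult \<theta> f g"
abbreviation cc where "cc \<equiv> xn_minus n e"
abbreviation cong where "cong \<equiv> skew_cong \<theta> n e"
abbreviation cls where "cls \<equiv> scls \<theta> n e"
abbreviation red where "red \<equiv> sred \<theta> n e"

lemmas th0 = th0[OF aut] and th1 = th1[OF aut] and thadd = thadd[OF aut] and thmult = thmult[OF aut]
  and theq0 = theq0[OF aut] and thsum = thsum[OF aut] and thneg = thneg[OF aut] and thdiff = thdiff[OF aut]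
lemmas coeff_map_th = coeff_map_th[OF aut]
lemmas sm_add_left = sm_add_left[OF aut] and sm_add_right = sm_add_right[OF aut]
  and sm_zero_left = sm_zero_left[OF aut] and sm_zero_right = sm_zero_right[OF aut]
  and sm_minus_left = sm_minus_left[OF aut] and sm_minus_right = sm_minus_right[OF aut]
  and sm_diff_left = sm_diff_left[OF aut] and sm_diff_right = sm_diff_right[OF aut]
  and sm_sum_left = sm_sum_left[OF aut] and sm_sum_right = sm_sum_right[OF aut]
  and sm_monom_left = sm_monom_left[OF aut] and sm_monom_monom = sm_monom_monom[OF aut]
  and sm_const_left = sm_const_left[OF aut] and sm_assoc = sm_assoc[OF aut]
  and sm_one_left = sm_one_left[OF aut] and sm_one_right = sm_one_right[OF aut]
  and coeff_sm = coeff_sm[OF aut] and coeff_sm_monom1 = coeff_sm_monom1[OF aut]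
  and degree_sm_le = degree_sm_le[OF aut] and degree_sm = degree_sm[OF aut]
  and sm_eq0 = sm_eq0[OF aut] and sm_cancel_left = sm_cancel_left[OF aut]
  and sm_cancel_right = sm_cancel_right[OF aut] and sm_smult_left = sm_smult_left[OF aut]
  and sm_gen = sm_gen[OF aut]
declare th0[simp] th1[simp] thadd[simp] thmult[simp] theq0[simp] thneg[simp] thdiff[simp] coeff_map_th[simp]
  sm_zero_left[simp] sm_zero_right[simp] sm_one_left[simp] sm_one_right[simp]

lemma thn: "(\<theta>^^n) x = x" using nid by simp
lemma thefix: "(\<theta>^^i) e = e" using efix by (rule funpow_fix)

lemma coeff_cc: "coeff cc k = (if k = n then 1 else if k = 0 then - e else 0)"
  using npos by (auto simp: xn_minus_def coeff_monom coeff_pCons split: nat.split)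

lemma degree_cc: "degree cc = n"
proof -
  have "degree cc \<le> n" unfolding xn_minus_def
    by (rule order.trans[OF degree_diff_le]) (auto simp: degree_monom_le)
  moreover have "coeff cc n \<noteq> 0" by (simp add: coeff_cc)
  ultimately show ?thesis by (simp add: le_antisym le_degree)
qed

lemma cc_nz: "cc \<noteq> 0" using degree_cc npos by auto

lemma sm_xn_left: "monom 1 n \<star> f = monom 1 n * f"
  by (simp add: sm_monom_left nid)

lemma sm_poly_right: "(\<And>i. map_poly (\<theta>^^i) p = p) \<Longrightarrow> f \<star> p = f * p"
proof -
  assume p: "\<And>i. map_poly (\<theta>^^i) p = p"
  have "f \<star> p = (\<Sum>i\<le>degree f. monom (coeff f i) i * p)"
    unfolding skew_mult_def using p by simp
  also have "\<dots> = f * p" by (simp add: sum_distrib_right[symmetric] poly_as_sum_of_monoms)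
  finally show ?thesis .
qed

lemma cc_central: "cc \<star> f = f \<star> cc"
proof -
  have m: "map_poly (\<theta>^^i) cc = cc" for i
    unfolding xn_minus_def by (simp add: map_poly_th_diff[OF aut] map_poly_th_monom[OF aut]
      map_poly_th_const[OF aut] thefix)
  have "cc \<star> f = monom 1 n \<star> f - [:e:] \<star> f" unfolding xn_minus_def by (rule sm_diff_left)
  also have "\<dots> = cc * f" by (simp add: sm_xn_left sm_const_left xn_minus_def left_diff_distrib)
  also have "\<dots> = f \<star> cc" using sm_poly_right[OF m] by (simp add: mult.commute)
  finally show ?thesis .
qed

lemma cong_def': "cong f g \<longleftrightarrow> (\<exists>q. f - g = q \<star> cc)" by (simp add: skew_cong_def)

lemma cong_refl[simp]: "cong f f" unfolding cong_def' by (rule exI[of _ 0]) simp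
lemma cong_sym: "cong f g \<Longrightarrow> cong g f"
proof -
  assume "cong f g" then obtain q where "f - g = q \<star> cc" unfolding cong_def' by blast
  moreover have "g - f = - (f - g)" by simp
  ultimately have "g - f = (- q) \<star> cc" by (simp add: sm_minus_left)
  then show ?thesis unfolding cong_def' by blast
qed
lemma cong_trans: "cong f g \<Longrightarrow> cong g h \<Longrightarrow> cong f h"
proof -
  assume "cong f g" "cong g h"
  then obtain q q' where "f - g = q \<star> cc" "g - h = q' \<star> cc" unfolding cong_def' by blast
  moreover have "f - h = (f - g) + (g - h)" by simp
  ultimately have "f - h = (q + q') \<star> cc" by (simp add: sm_add_left)
  then show ?thesis unfolding cong_def' by blast
qed
lemma cong_add: "cong f g \<Longrightarrow> cong f' g' \<Longrightarrow> cong (f + f') (g + g')"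
proof -
  assume "cong f g" "cong f' g'"
  then obtain q q' where "f - g = q \<star> cc" "f' - g' = q' \<star> cc" unfolding cong_def' by blast
  moreover have "(f + f') - (g + g') = (f - g) + (f' - g')" by simp
  ultimately have "(f + f') - (g + g') = (q + q') \<star> cc" by (simp add: sm_add_left)
  then show ?thesis unfolding cong_def' by blast
qed
lemma cong_diff: "cong f g \<Longrightarrow> cong f' g' \<Longrightarrow> cong (f - f') (g - g')"
proof -
  assume "cong f g" "cong f' g'"
  then obtain q q' where "f - g = q \<star> cc" "f' - g' = q' \<star> cc" unfolding cong_def' by blast
  moreover have "(f - f') - (g - g') = (f - g) - (f' - g')" by simp
  ultimately have "(f - f') - (g - g') = (q - q') \<star> cc" by (simp add: sm_diff_left)
  then show ?thesis unfolding cong_def' by blast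
qed
lemma cong_left: "cong f g \<Longrightarrow> cong (r \<star> f) (r \<star> g)"
proof -
  assume "cong f g"
  then obtain q where "f - g = q \<star> cc" unfolding cong_def' by blast
  then have "r \<star> f - r \<star> g = (r \<star> q) \<star> cc" by (simp add: sm_assoc flip: sm_diff_right)
  then show ?thesis unfolding cong_def' by blast
qed
lemma cong_right: "cong f g \<Longrightarrow> cong (f \<star> r) (g \<star> r)"
proof -
  assume "cong f g"
  then obtain q where "f - g = q \<star> cc" unfolding cong_def' by blast
  then have "f \<star> r - g \<star> r = (q \<star> cc) \<star> r" by (simp flip: sm_diff_left)
  also have "\<dots> = (q \<star> r) \<star> cc" by (simp add: sm_assoc cc_central)
  finally show ?thesis unfolding cong_def' by blast
qed
lemma cong_sum: "(\<And>x. x \<in> A \<Longrightarrow> cong (F x) (G x)) \<Longrightarrow> cong (sum F A) (sum G A)"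
  by (induction A rule: infinite_finite_induct) (auto intro: cong_add)
lemma cong_smult: "cong f g \<Longrightarrow> cong (Polynomial.smult b f) (Polynomial.smult b g)"
  using cong_left[of f g "[:b:]"] by (simp add: sm_const_left)
lemma cong_mult_cc: "cong (q \<star> cc) 0" unfolding cong_def' by auto
lemma cong_0_iff: "cong f 0 \<longleftrightarrow> (\<exists>q. f = q \<star> cc)" unfolding cong_def' by simp

lemma cong_mult: "cong f f' \<Longrightarrow> cong g g' \<Longrightarrow> cong (f \<star> g) (f' \<star> g')"
  by (meson cong_left cong_right cong_trans)

lemma scls_eq: "cls f = cls g \<longleftrightarrow> cong f g"
proof
  assume "cls f = cls g"
  then have "g \<in> cls f" by (simp add: scls_def)
  then show "cong f g" by (simp add: scls_def)
next
  assume "cong f g"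
  then have "cong f h \<longleftrightarrow> cong g h" for h by (meson cong_sym cong_trans)
  then show "cls f = cls g" unfolding scls_def by auto
qed

lemma srep_scls: "cong f (srep (cls f))"
proof -
  have "f \<in> cls f" by (simp add: scls_def)
  then have "srep (cls f) \<in> cls f" unfolding srep_def by (rule someI)
  then show ?thesis by (simp add: scls_def)
qed

lemma srep_scls': "cong (srep (cls f)) f" using srep_scls by (rule cong_sym)

lemma SS_E: "X \<in> SS \<theta> n e \<Longrightarrow> (\<And>f. X = cls f \<Longrightarrow> P) \<Longrightarrow> P"
  unfolding SS_def by auto

lemma scls_SS[simp]: "cls f \<in> SS \<theta> n e" unfolding SS_def by auto

lemma sadd_scls: "sadd \<theta> n e (cls f) (cls g) = cls (f + g)"
  unfolding sadd_def scls_eq by (intro cong_add srep_scls')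
lemma smul_scls: "smul \<theta> n e (cls f) (cls g) = cls (f \<star> g)"
  unfolding smul_def scls_eq by (intro cong_mult srep_scls' cong_refl)
lemma sact_scls: "sact \<theta> n e r (cls f) = cls (r \<star> f)"
  unfolding sact_def scls_eq by (intro cong_left srep_scls')
lemma sact_r_scls: "sact_r \<theta> n e (cls f) r = cls (f \<star> r)"
  unfolding sact_r_def scls_eq by (intro cong_right srep_scls')

lemma red_exists: "\<exists>r. degree r < n \<and> cong f r"
proof (induction "degree f" arbitrary: f rule: less_induct)
  case less
  show ?case
  proof (cases "degree f < n")
    case True then show ?thesis by (intro exI[of _ f]) simp
  next
    case False
    define d where "d = degree f"
    define t where "t = monom (lead_coeff f) (d - n)"
    have dn: "n \<le> d" using False d_def by simp
    have ct: "coeff (t \<star> cc) d = lead_coeff f"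
      using dn by (simp add: t_def sm_monom_left coeff_monom_mult coeff_cc d_def)
    have dt: "degree (t \<star> cc) \<le> d"
      using degree_sm_le[of t cc] degree_monom_le[of "lead_coeff f" "d - n"] dn
      by (simp add: t_def degree_cc)
    define f' where "f' = f - t \<star> cc"
    have "degree f' \<le> d" unfolding f'_def using dt d_def
      by (intro degree_diff_le) auto
    moreover have "coeff f' d = 0" unfolding f'_def coeff_diff ct by (simp add: d_def)
    ultimately have "degree f' < degree f" using degree_less_if_top0[of f' d] npos dn d_def by simp
    then obtain r where r: "degree r < n" "cong f' r" using less by blast
    have "cong f f'" unfolding cong_def' f'_def by auto
    then show ?thesis using r cong_trans by blast
  qed
qed

lemma red_unique: "degree r1 < n \<Longrightarrow> degree r2 < n \<Longrightarrow> cong r1 r2 \<Longrightarrow> r1 = r2"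
proof -
  assume d: "degree r1 < n" "degree r2 < n" and "cong r1 r2"
  then obtain q where q: "r1 - r2 = q \<star> cc" unfolding cong_def' by blast
  show "r1 = r2"
  proof (cases "q = 0")
    case True then show ?thesis using q by simp
  next
    case False
    then have "degree (q \<star> cc) \<ge> n" using degree_sm[of q cc] cc_nz degree_cc by simp
    moreover have "degree (r1 - r2) < n" using d by (rule degree_diff_less)
    ultimately show ?thesis using q by simp
  qed
qed

lemma red_prop: "degree (red f) < n \<and> cong f (red f)"
  unfolding sred_def
proof (rule theI')
  show "\<exists>!r. degree r < n \<and> cong f r"
    using red_exists red_unique cong_trans cong_sym by metis
qed

lemma red_deg: "degree (red f) < n" using red_prop by blast
lemma red_cong: "cong f (red f)" using red_prop by blast
lemma red_eqI: "degree r < n \<Longrightarrow> cong f r \<Longrightarrow> red f = r"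
  using red_unique red_prop cong_trans cong_sym by metis
lemma red_cong_eq: "cong f g \<Longrightarrow> red f = red g"
  by (meson cong_sym cong_trans red_cong red_deg red_eqI)
lemma red_id: "degree f < n \<Longrightarrow> red f = f" by (simp add: red_eqI)
lemma red_eq_iff: "red f = red g \<longleftrightarrow> cong f g"
  by (metis cong_sym cong_trans red_cong red_cong_eq)
lemma red_0[simp]: "red 0 = 0" using npos by (simp add: red_id)
lemma red_add: "red (f + g) = red f + red g"
  by (rule red_eqI) (auto intro: cong_add red_cong le_less_trans[OF degree_add_le_max] simp: red_deg)
lemma red_smult: "red (Polynomial.smult b f) = Polynomial.smult b (red f)"
  by (rule red_eqI) (auto intro: cong_smult red_cong le_less_trans[OF degree_smult_le] simp: red_deg npos)
lemma red_sum: "red (sum F A) = (\<Sum>x\<in>A. red (F x))"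
  by (induction A rule: infinite_finite_induct) (auto simp: red_add)
lemma red_cc[simp]: "red cc = 0" by (rule red_eqI) (use npos cong_mult_cc[of 1] in auto)

lemma sv_scls: "sv \<theta> n e (cls f) = vec n (\<lambda>i. coeff (red f) i)"
  unfolding sv_def
proof (rule the_equality)
  show "vec n (coeff (red f)) \<in> carrier_vec n \<and> cls (\<Sum>i<n. monom (vec n (coeff (red f)) $ i) i) = cls f"
    by (simp add: sum_monom_lessThan red_deg scls_eq cong_sym red_cong)
next
  fix c :: "'a vec" assume c: "c \<in> carrier_vec n \<and> cls (\<Sum>i<n. monom (c $ i) i) = cls f"
  let ?p = "\<Sum>i<n. monom (c $ i) i"
  have "red f = ?p"
    using c by (intro red_eqI degree_sum_monom_lessThan npos) (simp add: scls_eq cong_sym)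
  then show "c = vec n (coeff (red f))"
    using c by (intro eq_vecI) (auto simp: coeff_sum_monom_lessThan)
qed

lemma Mmat_scls: "Mmat \<theta> n e (cls f) = mat n n (\<lambda>(i, j). coeff (red (monom 1 i \<star> f)) j)"
  unfolding Mmat_def sact_scls sv_scls by (intro eq_matI) auto

end



context skewq begin

lemma cls0_iff: "cls f = cls 0 \<longleftrightarrow> (\<exists>q. f = q \<star> cc)"
  by (simp add: scls_eq cong_0_iff)

lemma cls_mult_cc: "cls (q \<star> cc) = cls 0"
  using cls0_iff by blast

lemma monom_sm_smult: "monom b l \<star> g = Polynomial.smult b (monom 1 l \<star> g)"
  unfolding sm_monom_left by (metis mult_smult_left smult_monom mult.right_neutral)

lemma Mmat_add: "Mmat \<theta> n e (cls (f + g)) = Mmat \<theta> n e (cls f) + Mmat \<theta> n e (cls g)"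
  unfolding Mmat_scls by (intro eq_matI) (auto simp: sm_add_right red_add)

lemma Mmat_zero: "Mmat \<theta> n e (cls 0) = 0\<^sub>m n n"
  unfolding Mmat_scls by (intro eq_matI) auto

lemma Mmat_one: "Mmat \<theta> n e (cls 1) = 1\<^sub>m n"
  unfolding Mmat_scls by (intro eq_matI) (auto simp: red_id degree_monom_eq coeff_monom)

lemma red_left_expand: "red (monom 1 i \<star> (f \<star> g)) =
   (\<Sum>l<n. Polynomial.smult (coeff (red (monom 1 i \<star> f)) l) (red (monom 1 l \<star> g)))"
proof -
  let ?r = "red (monom 1 i \<star> f)"
  have "cong (monom 1 i \<star> f \<star> g) (?r \<star> g)" by (intro cong_right red_cong)
  then have "red (monom 1 i \<star> f \<star> g) = red (?r \<star> g)" by (rule red_cong_eq)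
  then have "red (monom 1 i \<star> (f \<star> g)) = red (?r \<star> g)" by (simp add: sm_assoc)
  also have "?r \<star> g = (\<Sum>l<n. monom (coeff ?r l) l) \<star> g" by (simp add: sum_monom_lessThan red_deg)
  also have "\<dots> = (\<Sum>l<n. Polynomial.smult (coeff ?r l) (monom 1 l \<star> g))"
    unfolding sm_sum_left by (rule sum.cong[OF refl], rule monom_sm_smult)
  finally show ?thesis by (simp add: red_sum red_smult)
qed

lemma Mmat_mult: "Mmat \<theta> n e (cls (f \<star> g)) = Mmat \<theta> n e (cls f) * Mmat \<theta> n e (cls g)"
proof (rule eq_matI)
  fix i j assume ij: "i < dim_row (Mmat \<theta> n e (cls f) * Mmat \<theta> n e (cls g))"
     "j < dim_col (Mmat \<theta> n e (cls f) * Mmat \<theta> n e (cls g))"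
  then have i: "i < n" and j: "j < n" by (simp_all add: Mmat_scls)
  have "(Mmat \<theta> n e (cls f) * Mmat \<theta> n e (cls g)) $$ (i, j) =
     (\<Sum>l\<in>{0..<n}. coeff (red (monom 1 i \<star> f)) l * coeff (red (monom 1 l \<star> g)) j)"
    using i j by (simp add: Mmat_scls scalar_prod_def)
  also have "\<dots> = coeff (red (monom 1 i \<star> (f \<star> g))) j"
    by (simp add: red_left_expand coeff_sum atLeast0LessThan)
  finally show "Mmat \<theta> n e (cls (f \<star> g)) $$ (i, j) = (Mmat \<theta> n e (cls f) * Mmat \<theta> n e (cls g)) $$ (i, j)"
    using i j by (simp add: Mmat_scls)
qed (simp_all add: Mmat_scls)

lemma Mmat_inj: "Mmat \<theta> n e (cls f) = Mmat \<theta> n e (cls g) \<Longrightarrow> cls f = cls g"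
proof -
  assume M: "Mmat \<theta> n e (cls f) = Mmat \<theta> n e (cls g)"
  have "coeff (red f) j = coeff (red g) j" for j
  proof (cases "j < n")
    case True
    have "Mmat \<theta> n e (cls f) $$ (0, j) = Mmat \<theta> n e (cls g) $$ (0, j)" using M by simp
    then show ?thesis using True npos by (simp add: Mmat_scls)
  next
    case False
    then show ?thesis using red_deg[of f] red_deg[of g] by (simp add: coeff_eq_0)
  qed
  then have "red f = red g" by (simp add: poly_eqI)
  then show ?thesis by (simp add: scls_eq red_eq_iff)
qed

lemma part1:
  "(\<forall>X\<in>SS \<theta> n e. \<forall>Y\<in>SS \<theta> n e.
        Mmat \<theta> n e (sadd \<theta> n e X Y) = Mmat \<theta> n e X + Mmat \<theta> n e Y
      \<and> Mmat \<theta> n e (smul \<theta> n e X Y) = Mmat \<theta> n e X * Mmat \<theta> n e Y)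
     \<and> Mmat \<theta> n e (cls 1) = 1\<^sub>m n
     \<and> inj_on (Mmat \<theta> n e) (SS \<theta> n e)"
proof (intro conjI ballI)
  fix X Y assume "X \<in> SS \<theta> n e" "Y \<in> SS \<theta> n e"
  then obtain f g where "X = cls f" "Y = cls g" by (meson SS_E)
  then show "Mmat \<theta> n e (sadd \<theta> n e X Y) = Mmat \<theta> n e X + Mmat \<theta> n e Y"
    "Mmat \<theta> n e (smul \<theta> n e X Y) = Mmat \<theta> n e X * Mmat \<theta> n e Y"
    by (simp_all add: sadd_scls smul_scls Mmat_add Mmat_mult)
next
  show "Mmat \<theta> n e (cls 1) = 1\<^sub>m n" by (rule Mmat_one)
next
  show "inj_on (Mmat \<theta> n e) (SS \<theta> n e)"
  proof (rule inj_onI)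
    fix X Y assume "X \<in> SS \<theta> n e" "Y \<in> SS \<theta> n e" "Mmat \<theta> n e X = Mmat \<theta> n e Y"
    then show "X = Y" by (metis SS_E Mmat_inj)
  qed
qed

lemma part4:
  assumes f: "cc = u \<star> w"
  shows "(\<forall>f. sact_r \<theta> n e (cls f) w = cls (f \<star> w))
     \<and> (\<forall>X\<in>SS \<theta> n e. \<forall>Y\<in>SS \<theta> n e. \<forall>r.
          sact_r \<theta> n e (sadd \<theta> n e X Y) w = sadd \<theta> n e (sact_r \<theta> n e X w) (sact_r \<theta> n e Y w)
        \<and> sact_r \<theta> n e (sact \<theta> n e r X) w = sact \<theta> n e r (sact_r \<theta> n e X w))
     \<and> {X \<in> SS \<theta> n e. sact_r \<theta> n e X w = cls 0} = {sact \<theta> n e r (cls u) | r. True}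
     \<and> {sact \<theta> n e r (cls u) | r. True}
         = ann_l \<theta> n e {smul \<theta> n e (cls w) T | T. T \<in> SS \<theta> n e}"
proof -
  have w0: "w \<noteq> 0" using f cc_nz by auto
  have key: "cls (p \<star> w) = cls 0 \<longleftrightarrow> (\<exists>q. p = q \<star> u)" for p
  proof
    assume "cls (p \<star> w) = cls 0"
    then obtain q where "p \<star> w = q \<star> cc" using cls0_iff by blast
    then have "p \<star> w = (q \<star> u) \<star> w" by (simp add: f sm_assoc)
    then show "\<exists>q. p = q \<star> u" using sm_cancel_right[OF w0] by blast
  next
    assume "\<exists>q. p = q \<star> u"
    then obtain q where "p = q \<star> u" by blast
    then have "p \<star> w = q \<star> cc" by (simp add: f sm_assoc)
    then show "cls (p \<star> w) = cls 0" using cls0_iff by blast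
  qed
  have A: "\<forall>f. sact_r \<theta> n e (cls f) w = cls (f \<star> w)" by (simp add: sact_r_scls)
  have B: "\<forall>X\<in>SS \<theta> n e. \<forall>Y\<in>SS \<theta> n e. \<forall>r.
          sact_r \<theta> n e (sadd \<theta> n e X Y) w = sadd \<theta> n e (sact_r \<theta> n e X w) (sact_r \<theta> n e Y w)
        \<and> sact_r \<theta> n e (sact \<theta> n e r X) w = sact \<theta> n e r (sact_r \<theta> n e X w)"
  proof (intro ballI allI)
    fix X Y r assume "X \<in> SS \<theta> n e" "Y \<in> SS \<theta> n e"
    then obtain f g where "X = cls f" "Y = cls g" by (meson SS_E)
    then show "sact_r \<theta> n e (sadd \<theta> n e X Y) w = sadd \<theta> n e (sact_r \<theta> n e X w) (sact_r \<theta> n e Y w)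
        \<and> sact_r \<theta> n e (sact \<theta> n e r X) w = sact \<theta> n e r (sact_r \<theta> n e X w)"
      by (simp add: sadd_scls sact_scls sact_r_scls sm_add_left sm_assoc)
  qed
  have C: "{X \<in> SS \<theta> n e. sact_r \<theta> n e X w = cls 0} = {sact \<theta> n e r (cls u) | r. True}"
  proof (intro equalityI subsetI)
    fix X assume "X \<in> {X \<in> SS \<theta> n e. sact_r \<theta> n e X w = cls 0}"
    then obtain p where X: "X = cls p" "cls (p \<star> w) = cls 0" by (auto simp: sact_r_scls elim: SS_E)
    then obtain q where "p = q \<star> u" using key by blast
    then show "X \<in> {sact \<theta> n e r (cls u) | r. True}" using X by (auto simp: sact_scls)
  next
    fix X assume "X \<in> {sact \<theta> n e r (cls u) | r. True}"
    then obtain r where "X = cls (r \<star> u)" by (auto simp: sact_scls)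
    then show "X \<in> {X \<in> SS \<theta> n e. sact_r \<theta> n e X w = cls 0}"
      using key by (auto simp: sact_r_scls)
  qed
  have D: "{sact \<theta> n e r (cls u) | r. True} = ann_l \<theta> n e {smul \<theta> n e (cls w) T | T. T \<in> SS \<theta> n e}"
  proof (intro equalityI subsetI)
    fix X assume "X \<in> {sact \<theta> n e r (cls u) | r. True}"
    then obtain r where X: "X = cls (r \<star> u)" by (auto simp: sact_scls)
    show "X \<in> ann_l \<theta> n e {smul \<theta> n e (cls w) T | T. T \<in> SS \<theta> n e}"
      unfolding ann_l_def
    proof (intro CollectI conjI ballI)
      show "X \<in> SS \<theta> n e" using X by simp
      fix x assume "x \<in> {smul \<theta> n e (cls w) T | T. T \<in> SS \<theta> n e}"
      then obtain t where "x = cls (w \<star> t)" by (auto simp: smul_scls elim!: SS_E)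
      have "(r \<star> u) \<star> (w \<star> t) = r \<star> ((u \<star> w) \<star> t)" by (simp add: sm_assoc)
      also have "\<dots> = r \<star> (cc \<star> t)" by (simp add: f)
      also have "\<dots> = r \<star> (t \<star> cc)" by (simp only: cc_central)
      also have "\<dots> = (r \<star> t) \<star> cc" by (simp add: sm_assoc)
      finally have "smul \<theta> n e X x = cls ((r \<star> t) \<star> cc)"
        using \<open>x = cls (w \<star> t)\<close> by (simp add: X smul_scls)
      then show "smul \<theta> n e X x = cls 0" by (simp add: cls_mult_cc)
    qed
  next
    fix X assume "X \<in> ann_l \<theta> n e {smul \<theta> n e (cls w) T | T. T \<in> SS \<theta> n e}"
    then have X: "X \<in> SS \<theta> n e" and allx: "\<forall>x\<in>{smul \<theta> n e (cls w) T | T. T \<in> SS \<theta> n e}. smul \<theta> n e X x = cls 0"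
      unfolding ann_l_def by blast+
    have "smul \<theta> n e (cls w) (cls 1) \<in> {smul \<theta> n e (cls w) T | T. T \<in> SS \<theta> n e}" using scls_SS by blast
    then have "smul \<theta> n e X (smul \<theta> n e (cls w) (cls 1)) = cls 0" using allx by blast
    moreover obtain p where "X = cls p" using X by (meson SS_E)
    ultimately have "cls (p \<star> w) = cls 0" by (simp add: smul_scls)
    then obtain q where "p = q \<star> u" using key by blast
    then show "X \<in> {sact \<theta> n e r (cls u) | r. True}" using \<open>X = cls p\<close> by (auto simp: sact_scls)
  qed
  show ?thesis using A B C D by blast
qed

lemma part5:
  assumes f: "cc = w \<star> u"
  shows "(\<forall>f. sact \<theta> n e w (cls f) = cls (w \<star> f))
     \<and> (\<forall>X\<in>SS \<theta> n e. \<forall>Y\<in>SS \<theta> n e. \<forall>r.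
          sact \<theta> n e w (sadd \<theta> n e X Y) = sadd \<theta> n e (sact \<theta> n e w X) (sact \<theta> n e w Y)
        \<and> sact \<theta> n e w (sact_r \<theta> n e X r) = sact_r \<theta> n e (sact \<theta> n e w X) r)
     \<and> {X \<in> SS \<theta> n e. sact \<theta> n e w X = cls 0}
         = {smul \<theta> n e (cls u) T | T. T \<in> SS \<theta> n e}
     \<and> {smul \<theta> n e (cls u) T | T. T \<in> SS \<theta> n e}
         = ann_r \<theta> n e {smul \<theta> n e T (cls w) | T. T \<in> SS \<theta> n e}"
proof -
  have w0: "w \<noteq> 0" using f cc_nz by auto
  have key: "cls (w \<star> p) = cls 0 \<longleftrightarrow> (\<exists>q. p = u \<star> q)" for p
  proof
    assume "cls (w \<star> p) = cls 0"
    then obtain q where "w \<star> p = q \<star> cc" using cls0_iff by blast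
    also have "q \<star> cc = cc \<star> q" by (rule cc_central[symmetric])
    also have "cc \<star> q = w \<star> (u \<star> q)" unfolding f by (rule sm_assoc)
    finally have "w \<star> p = w \<star> (u \<star> q)" .
    then show "\<exists>q. p = u \<star> q" using sm_cancel_left[OF w0] by blast
  next
    assume "\<exists>q. p = u \<star> q"
    then obtain q where "p = u \<star> q" by blast
    then have "w \<star> p = w \<star> (u \<star> q)" by simp
    also have "\<dots> = cc \<star> q" unfolding f by (rule sm_assoc[symmetric])
    also have "\<dots> = q \<star> cc" by (rule cc_central)
    finally have "w \<star> p = q \<star> cc" .
    then show "cls (w \<star> p) = cls 0" using cls0_iff by blast
  qed
  have A: "\<forall>f. sact \<theta> n e w (cls f) = cls (w \<star> f)" by (simp add: sact_scls)
  have B: "\<forall>X\<in>SS \<theta> n e. \<forall>Y\<in>SS \<theta> n e. \<forall>r.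
          sact \<theta> n e w (sadd \<theta> n e X Y) = sadd \<theta> n e (sact \<theta> n e w X) (sact \<theta> n e w Y)
        \<and> sact \<theta> n e w (sact_r \<theta> n e X r) = sact_r \<theta> n e (sact \<theta> n e w X) r"
  proof (intro ballI allI)
    fix X Y r assume "X \<in> SS \<theta> n e" "Y \<in> SS \<theta> n e"
    then obtain f g where "X = cls f" "Y = cls g" by (meson SS_E)
    then show "sact \<theta> n e w (sadd \<theta> n e X Y) = sadd \<theta> n e (sact \<theta> n e w X) (sact \<theta> n e w Y)
        \<and> sact \<theta> n e w (sact_r \<theta> n e X r) = sact_r \<theta> n e (sact \<theta> n e w X) r"
      by (simp add: sadd_scls sact_scls sact_r_scls sm_add_right sm_assoc)
  qed
  have C: "{X \<in> SS \<theta> n e. sact \<theta> n e w X = cls 0} = {smul \<theta> n e (cls u) T | T. T \<in> SS \<theta> n e}"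
  proof (intro equalityI subsetI)
    fix X assume "X \<in> {X \<in> SS \<theta> n e. sact \<theta> n e w X = cls 0}"
    then obtain p where X: "X = cls p" "cls (w \<star> p) = cls 0" by (auto simp: sact_scls elim: SS_E)
    then obtain q where "p = u \<star> q" using key by blast
    then have "X = smul \<theta> n e (cls u) (cls q)" using X(1) by (simp add: smul_scls)
    then show "X \<in> {smul \<theta> n e (cls u) T | T. T \<in> SS \<theta> n e}" using scls_SS by blast
  next
    fix X assume "X \<in> {smul \<theta> n e (cls u) T | T. T \<in> SS \<theta> n e}"
    then obtain T where T: "T \<in> SS \<theta> n e" "X = smul \<theta> n e (cls u) T" by blast
    then obtain q where "T = cls q" by (meson SS_E)
    then have "X = cls (u \<star> q)" using T by (simp add: smul_scls)
    then show "X \<in> {X \<in> SS \<theta> n e. sact \<theta> n e w X = cls 0}"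
      using key by (auto simp: sact_scls)
  qed
  have D: "{smul \<theta> n e (cls u) T | T. T \<in> SS \<theta> n e} = ann_r \<theta> n e {smul \<theta> n e T (cls w) | T. T \<in> SS \<theta> n e}"
  proof (intro equalityI subsetI)
    fix X assume "X \<in> {smul \<theta> n e (cls u) T | T. T \<in> SS \<theta> n e}"
    then obtain T where T: "T \<in> SS \<theta> n e" "X = smul \<theta> n e (cls u) T" by blast
    then obtain q where "T = cls q" by (meson SS_E)
    then have X: "X = cls (u \<star> q)" using T by (simp add: smul_scls)
    show "X \<in> ann_r \<theta> n e {smul \<theta> n e T (cls w) | T. T \<in> SS \<theta> n e}"
      unfolding ann_r_def
    proof (intro CollectI conjI ballI)
      show "X \<in> SS \<theta> n e" using X by simp
      fix x assume "x \<in> {smul \<theta> n e T (cls w) | T. T \<in> SS \<theta> n e}"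
      then obtain T where T: "T \<in> SS \<theta> n e" "x = smul \<theta> n e T (cls w)" by blast
      then obtain t where "T = cls t" by (meson SS_E)
      then have "x = cls (t \<star> w)" using T by (simp add: smul_scls)
      have "(t \<star> w) \<star> (u \<star> q) = t \<star> ((w \<star> u) \<star> q)" by (simp add: sm_assoc)
      also have "\<dots> = t \<star> (cc \<star> q)" by (simp add: f)
      also have "\<dots> = t \<star> (q \<star> cc)" by (simp only: cc_central)
      also have "\<dots> = (t \<star> q) \<star> cc" by (simp add: sm_assoc)
      finally have "smul \<theta> n e x X = cls ((t \<star> q) \<star> cc)"
        using \<open>x = cls (t \<star> w)\<close> by (simp add: X smul_scls)
      then show "smul \<theta> n e x X = cls 0" by (simp add: cls_mult_cc)
    qed
  next
    fix X assume "X \<in> ann_r \<theta> n e {smul \<theta> n e T (cls w) | T. T \<in> SS \<theta> n e}"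
    then have X: "X \<in> SS \<theta> n e" and allx: "\<forall>x\<in>{smul \<theta> n e T (cls w) | T. T \<in> SS \<theta> n e}. smul \<theta> n e x X = cls 0"
      unfolding ann_r_def by blast+
    have "smul \<theta> n e (cls 1) (cls w) \<in> {smul \<theta> n e T (cls w) | T. T \<in> SS \<theta> n e}" using scls_SS by blast
    then have "smul \<theta> n e (smul \<theta> n e (cls 1) (cls w)) X = cls 0" using allx by blast
    moreover obtain p where "X = cls p" using X by (meson SS_E)
    ultimately have "cls (w \<star> p) = cls 0" by (simp add: smul_scls)
    then obtain q where "p = u \<star> q" using key by blast
    then have "X = smul \<theta> n e (cls u) (cls q)" using \<open>X = cls p\<close> by (simp add: smul_scls)
    then show "X \<in> {smul \<theta> n e (cls u) T | T. T \<in> SS \<theta> n e}" using scls_SS by blast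
  qed
  show ?thesis using A B C D by blast
qed

end



definition srev :: "('a::field \<Rightarrow> 'a) \<Rightarrow> nat \<Rightarrow> 'a poly \<Rightarrow> 'a poly" where
  "srev \<theta> N f = (\<Sum>m\<le>N. monom ((\<theta>^^m) (coeff f (N - m))) m)"

lemma rho_srev: "rho_l \<theta> h = srev \<theta> (degree h) h"
  unfolding rho_l_def srev_def ..

context
  fixes \<theta> :: "'a::field \<Rightarrow> 'a"
  assumes aut: "field_aut \<theta>"
begin

abbreviation sm4 (infixl "\<star>" 70) where "f \<star> g \<equiv> skew_mult \<theta> f g"

lemmas th0' = th0[OF aut] and thadd' = thadd[OF aut] and thmult' = thmult[OF aut]
  and theq0' = theq0[OF aut] and thsum' = thsum[OF aut]
declare th0'[simp] thadd'[simp] thmult'[simp] theq0'[simp]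

lemma srev_add: "srev \<theta> N (f + g) = srev \<theta> N f + srev \<theta> N g"
  unfolding srev_def by (simp add: sum.distrib add_monom[symmetric])

lemma srev_0[simp]: "srev \<theta> N 0 = 0"
  unfolding srev_def by simp

lemma srev_sum: "srev \<theta> N (sum F A) = (\<Sum>x\<in>A. srev \<theta> N (F x))"
  by (induction A rule: infinite_finite_induct) (auto simp: srev_add)

lemma srev_monom: "p \<le> N \<Longrightarrow> srev \<theta> N (monom b p) = monom ((\<theta>^^(N - p)) b) (N - p)"
proof -
  assume p: "p \<le> N"
  have "srev \<theta> N (monom b p) = (\<Sum>m\<le>N. if m = N - p then monom ((\<theta>^^m) b) m else 0)"
    unfolding srev_def by (rule sum.cong[OF refl]) (use p in \<open>auto simp: coeff_monom\<close>)
  then show ?thesis by simp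
qed

lemma sum_monoms_N: "degree f \<le> N \<Longrightarrow> f = (\<Sum>p\<le>N. monom (coeff f p) p)"
  by (simp add: poly_as_sum_of_monoms')

lemma srev_mult:
  assumes f: "degree f \<le> N" and g: "degree g \<le> M"
  shows "srev \<theta> (N + M) (f \<star> g) = srev \<theta> M (map_poly (\<theta>^^N) g) \<star> srev \<theta> N f"
proof -
  let ?F = "\<lambda>p. monom (coeff f p) p" and ?G = "\<lambda>r. monom (coeff g r) r"
  have "f \<star> g = (\<Sum>p\<le>N. ?F p) \<star> (\<Sum>r\<le>M. ?G r)"
    using sum_monoms_N[OF f] sum_monoms_N[OF g] by simp
  also have "\<dots> = (\<Sum>p\<le>N. ?F p \<star> (\<Sum>r\<le>M. ?G r))" by (rule sm_sum_left[OF aut])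
  also have "\<dots> = (\<Sum>p\<le>N. \<Sum>r\<le>M. ?F p \<star> ?G r)" by (simp add: sm_sum_right[OF aut])
  finally have fg: "f \<star> g = (\<Sum>p\<le>N. \<Sum>r\<le>M. monom (coeff f p * (\<theta>^^p) (coeff g r)) (p + r))"
    by (simp add: sm_monom_monom[OF aut])
  have L: "srev \<theta> (N + M) (f \<star> g) = (\<Sum>p\<le>N. \<Sum>r\<le>M.
      monom ((\<theta>^^(N + M - (p + r))) (coeff f p * (\<theta>^^p) (coeff g r))) (N + M - (p + r)))"
    unfolding fg srev_sum by (intro sum.cong refl srev_monom) auto
  have mg: "map_poly (\<theta>^^N) g = (\<Sum>r\<le>M. monom ((\<theta>^^N) (coeff g r)) r)"
    by (subst sum_monoms_N[OF g]) (simp add: map_poly_th_sum[OF aut] map_poly_th_monom[OF aut])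
  have R1: "srev \<theta> M (map_poly (\<theta>^^N) g) = (\<Sum>r\<le>M. monom ((\<theta>^^(M - r)) ((\<theta>^^N) (coeff g r))) (M - r))"
    unfolding mg srev_sum by (intro sum.cong refl srev_monom) auto
  have R2: "srev \<theta> N f = (\<Sum>p\<le>N. monom ((\<theta>^^(N - p)) (coeff f p)) (N - p))"
    by (subst (1) sum_monoms_N[OF f]) (simp add: srev_sum srev_monom)
  have "srev \<theta> M (map_poly (\<theta>^^N) g) \<star> srev \<theta> N f =
     (\<Sum>p\<le>N. \<Sum>r\<le>M. monom ((\<theta>^^(M - r)) ((\<theta>^^N) (coeff g r))) (M - r) \<star> monom ((\<theta>^^(N - p)) (coeff f p)) (N - p))"
    unfolding R1 R2 by (simp add: sm_sum_left[OF aut] sm_sum_right[OF aut])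
  also have "\<dots> = (\<Sum>p\<le>N. \<Sum>r\<le>M.
      monom ((\<theta>^^(N + M - (p + r))) (coeff f p * (\<theta>^^p) (coeff g r))) (N + M - (p + r)))"
  proof (intro sum.cong refl)
    fix p r assume "p \<in> {..N}" "r \<in> {..M}"
    then have pr: "p \<le> N" "r \<le> M" by auto
    have e1: "M - r + (N - p) = N + M - (p + r)" using pr by simp
    have e2: "(\<theta>^^(M - r)) ((\<theta>^^N) x) = (\<theta>^^(N + M - (p + r))) ((\<theta>^^p) x)" for x
      using pr by (simp add: funpow_add_app) (simp add: algebra_simps)
    have e3: "(\<theta>^^(M - r)) ((\<theta>^^(N - p)) x) = (\<theta>^^(N + M - (p + r))) x" for x
      using pr by (simp add: funpow_add_app) (simp add: algebra_simps)
    show "monom ((\<theta>^^(M - r)) ((\<theta>^^N) (coeff g r))) (M - r) \<star> monom ((\<theta>^^(N - p)) (coeff f p)) (N - p) =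
      monom ((\<theta>^^(N + M - (p + r))) (coeff f p * (\<theta>^^p) (coeff g r))) (N + M - (p + r))"
      by (simp add: sm_monom_monom[OF aut] e1 e2 e3 mult.commute)
  qed
  finally show ?thesis using L by simp
qed

lemma coeff_rho: "coeff (rho_l \<theta> h) m = (if m \<le> degree h then (\<theta>^^m) (coeff h (degree h - m)) else 0)"
  unfolding rho_l_def by (simp add: coeff_sum coeff_monom)

lemma degree_rho: "coeff h 0 \<noteq> 0 \<Longrightarrow> degree (rho_l \<theta> h) = degree h"
proof -
  assume h0: "coeff h 0 \<noteq> 0"
  have "degree (rho_l \<theta> h) \<le> degree h" unfolding rho_l_def
    by (rule degree_sum_le) (auto intro: order.trans[OF degree_monom_le])
  moreover have "coeff (rho_l \<theta> h) (degree h) \<noteq> 0" using h0 by (simp add: coeff_rho)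
  ultimately show ?thesis by (simp add: le_antisym le_degree)
qed

lemma coeff_sm': "coeff (f \<star> g) k = (\<Sum>i\<le>k. coeff f i * (\<theta>^^i) (coeff g (k - i)))"
proof -
  have "coeff (f \<star> g) k = (\<Sum>i\<in>{i\<in>{..degree f}. i \<le> k}. coeff f i * (\<theta>^^i) (coeff g (k - i)))"
    unfolding coeff_sm[OF aut] by (rule sum.inter_filter[symmetric]) simp
  also have "\<dots> = (\<Sum>i\<le>k. coeff f i * (\<theta>^^i) (coeff g (k - i)))"
    by (rule sum.mono_neutral_left) (auto simp: coeff_eq_0 intro: le_degree)
  finally show ?thesis .
qed

lemma orth_mono:
  assumes hk: "degree h = k" and i: "i < k" and jk: "j + k < n"
    and zero: "\<And>s. 0 < s \<Longrightarrow> s < n \<Longrightarrow> coeff (g \<star> h) s = 0"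
  shows "(\<Sum>t<n. coeff (monom 1 i \<star> g) t * coeff (monom 1 j \<star> rho_l \<theta> h) t) = 0"
proof -
  define s0 where "s0 = k + j - i"
  let ?F = "\<lambda>t. (\<theta>^^i) (coeff g (t - i)) * (\<theta>^^t) (coeff h (k + j - t))"
  have trm: "coeff (monom 1 i \<star> g) t * coeff (monom 1 j \<star> rho_l \<theta> h) t
      = (if i \<le> t \<and> t \<le> k + j then ?F t else 0)" for t
  proof -
    have B: "coeff (monom 1 j \<star> rho_l \<theta> h) t = (if j \<le> t \<and> t \<le> k + j then (\<theta>^^t) (coeff h (k + j - t)) else 0)"
    proof (cases "j \<le> t \<and> t \<le> k + j")
      case True
      then have "(\<theta>^^j) ((\<theta>^^(t - j)) (coeff h (k - (t - j)))) = (\<theta>^^t) (coeff h (k + j - t))"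
        by (simp add: funpow_add_app)
      moreover have "t - j \<le> k" "k - (t - j) = k + j - t" using True by arith+
      ultimately show ?thesis using True by (simp add: coeff_sm_monom1[OF aut] coeff_rho hk)
    next
      case False
      then show ?thesis by (auto simp: coeff_sm_monom1[OF aut] coeff_rho hk)
    qed
    show ?thesis
    proof (cases "i \<le> t \<and> t \<le> k + j")
      case True
      show ?thesis
      proof (cases "j \<le> t")
        case True
        then show ?thesis using \<open>i \<le> t \<and> t \<le> k + j\<close> unfolding B by (simp add: coeff_sm_monom1[OF aut])
      next
        case False
        then have "coeff h (k + j - t) = 0" using hk by (intro coeff_eq_0) simp
        then show ?thesis using False \<open>i \<le> t \<and> t \<le> k + j\<close> unfolding B by simp
      qed
    next
      case False
      then show ?thesis unfolding B by (auto simp: coeff_sm_monom1[OF aut])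
    qed
  qed
  have "(\<Sum>t<n. coeff (monom 1 i \<star> g) t * coeff (monom 1 j \<star> rho_l \<theta> h) t)
      = (\<Sum>t<n. if i \<le> t \<and> t \<le> k + j then ?F t else 0)" by (simp add: trm)
  also have "\<dots> = (\<Sum>t\<in>{t\<in>{..<n}. i \<le> t \<and> t \<le> k + j}. ?F t)" by (rule sum.inter_filter[symmetric]) simp
  also have "{t\<in>{..<n}. i \<le> t \<and> t \<le> k + j} = {0 + i..s0 + i}" using i jk by (auto simp: s0_def)
  also have "sum ?F {0 + i..s0 + i} = (\<Sum>l = 0..s0. ?F (l + i))" by (rule sum.shift_bounds_cl_nat_ivl)
  also have "\<dots> = (\<Sum>l\<le>s0. (\<theta>^^i) (coeff g l * (\<theta>^^l) (coeff h (s0 - l))))"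
    by (intro sum.cong) (auto simp: s0_def funpow_add_app add.commute atLeast0AtMost)
  also have "\<dots> = (\<theta>^^i) (coeff (g \<star> h) s0)" by (simp add: coeff_sm' thsum')
  also have "\<dots> = 0" using i jk by (simp add: zero s0_def)
  finally show ?thesis .
qed

end



lemma finite_carrier_vec': "finite (carrier_vec m :: 'a::finite vec set)"
proof -
  have "carrier_vec m \<subseteq> vec_of_list ` {xs :: 'a list. set xs \<subseteq> UNIV \<and> length xs = m}"
  proof
    fix v :: "'a vec" assume "v \<in> carrier_vec m"
    then show "v \<in> vec_of_list ` {xs. set xs \<subseteq> UNIV \<and> length xs = m}"
      by (intro image_eqI[of _ _ "list_of_vec v"]) (auto simp: vec_list)
  qed
  moreover have "finite {xs :: 'a list. set xs \<subseteq> UNIV \<and> length xs = m}"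
    by (rule finite_lists_length_eq) simp
  ultimately show ?thesis by (meson finite_imageI finite_subset)
qed

lemma bilin_sum:
  fixes a :: "'i \<Rightarrow> 'c::comm_ring_1" and b :: "'j \<Rightarrow> 'c"
  shows "(\<Sum>t<n. (\<Sum>i\<in>I. a i * A i t) * (\<Sum>j\<in>J. b j * B j t)) =
   (\<Sum>i\<in>I. \<Sum>j\<in>J. a i * b j * (\<Sum>t<n. A i t * B j t))"
proof -
  have "(\<Sum>t<n. (\<Sum>i\<in>I. a i * A i t) * (\<Sum>j\<in>J. b j * B j t)) =
        (\<Sum>t<n. \<Sum>i\<in>I. \<Sum>j\<in>J. a i * b j * (A i t * B j t))"
    unfolding sum_product by (simp add: mult_ac)
  also have "\<dots> = (\<Sum>i\<in>I. \<Sum>t<n. \<Sum>j\<in>J. a i * b j * (A i t * B j t))"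
    by (rule sum.swap)
  also have "\<dots> = (\<Sum>i\<in>I. \<Sum>j\<in>J. \<Sum>t<n. a i * b j * (A i t * B j t))"
    by (intro sum.cong refl) (rule sum.swap)
  also have "\<dots> = (\<Sum>i\<in>I. \<Sum>j\<in>J. a i * b j * (\<Sum>t<n. A i t * B j t))"
    by (simp add: sum_distrib_left)
  finally show ?thesis .
qed

lemma coeff_srev: "coeff (srev \<theta> N f) m = (if m \<le> N then (\<theta>^^m) (coeff f (N - m)) else 0)"
  unfolding srev_def by (simp add: coeff_sum coeff_monom)

lemma coeff_sm_expand: assumes aut: "field_aut \<theta>" shows
  "coeff (skew_mult \<theta> r g) t = (\<Sum>i\<le>degree r. coeff r i * coeff (skew_mult \<theta> (monom 1 i) g) t)"
  unfolding coeff_sm_monom1[OF aut] unfolding coeff_sm[OF aut] by (intro sum.cong refl) simp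

context skewq begin

lemma red_mult_w: "cc = u \<star> w \<Longrightarrow> \<exists>r'. red (r \<star> w) = r' \<star> w"
proof -
  assume f: "cc = u \<star> w"
  obtain q where "r \<star> w - red (r \<star> w) = q \<star> cc" using red_cong cong_def' by blast
  then have "red (r \<star> w) = (r - q \<star> u) \<star> w" by (simp add: f sm_diff_left sm_assoc algebra_simps)
  then show ?thesis by blast
qed

lemma swap_fact: "cc = h \<star> g \<Longrightarrow> cc = g \<star> h"
proof -
  assume f: "cc = h \<star> g"
  have h0: "h \<noteq> 0" using f cc_nz by auto
  have "h \<star> (g \<star> h) = (h \<star> g) \<star> h" by (simp add: sm_assoc)
  also have "\<dots> = h \<star> cc" using f cc_central by simp
  finally show ?thesis using sm_cancel_left[OF h0] by metis
qed

end

locale sk6 = skewq \<theta> n a for \<theta> :: "'a::{finite,field} \<Rightarrow> 'a" and n a +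
  fixes g h :: "'a poly"
  assumes a0: "a \<noteq> 0" and fact: "cc = h \<star> g"
begin

lemma gh: "cc = g \<star> h" using swap_fact fact by blast
lemma h_nz: "h \<noteq> 0" and g_nz: "g \<noteq> 0" using fact cc_nz by auto
lemma deg_hg: "degree h + degree g = n" using fact degree_sm[OF h_nz g_nz] degree_cc by simp

lemma hg0: "coeff h 0 \<noteq> 0 \<and> coeff g 0 \<noteq> 0"
proof -
  have "coeff (h \<star> g) 0 = coeff h 0 * coeff g 0" by (simp add: coeff_sm'[OF aut])
  then have "coeff h 0 * coeff g 0 = - a" using fact coeff_cc npos by auto
  then show ?thesis using a0 by auto
qed

abbreviation k where "k \<equiv> degree h"
abbreviation rho where "rho \<equiv> rho_l \<theta> h"

lemma deg_rho: "degree rho = k" using degree_rho[OF aut] hg0 by blast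
lemma rho_nz: "rho \<noteq> 0"
proof -
  have "coeff rho 0 = lead_coeff h" by (simp add: coeff_rho[OF aut])
  then show ?thesis using h_nz by auto
qed

lemma a'fix: "\<theta> (inverse a) = inverse a" using fa_inverse[OF aut] efix by simp

lemma B: "skewq \<theta> n (inverse a)" using aut npos nid a'fix by unfold_locales

lemma srev_cc: "srev \<theta> n cc = 1 - monom a n"
  using npos by (intro poly_eqI) (auto simp: coeff_srev coeff_cc coeff_monom thn)

lemma ccB: "xn_minus n (inverse a) = ([:- inverse a:] \<star> srev \<theta> (n - k) (map_poly (\<theta>^^k) g)) \<star> rho"
proof -
  have "srev \<theta> (k + (n - k)) (h \<star> g) = srev \<theta> (n - k) (map_poly (\<theta>^^k) g) \<star> srev \<theta> k h"
    by (rule srev_mult[OF aut]) (use deg_hg in auto)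
  then have "1 - monom a n = srev \<theta> (n - k) (map_poly (\<theta>^^k) g) \<star> rho"
    using deg_hg fact srev_cc by (simp add: rho_srev)
  moreover have "xn_minus n (inverse a) = Polynomial.smult (- inverse a) (1 - monom a n)"
    using npos by (intro poly_eqI) (auto simp: xn_minus_def coeff_monom a0 coeff_pCons split: nat.split)
  ultimately show ?thesis by (simp add: sm_assoc sm_const_left sm_minus_left sm_smult_left)
qed

lemma orth_poly:
  assumes r: "degree (r \<star> g) < n" and s: "degree (s \<star> rho) < n"
  shows "(\<Sum>t<n. coeff (r \<star> g) t * coeff (s \<star> rho) t) = 0"
proof -
  have zero: "coeff (g \<star> h) t = 0" if "0 < t" "t < n" for t using that gh coeff_cc by auto
  have ri: "i < k" if "i \<le> degree r" "r \<noteq> 0" for i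
    using that r degree_sm[OF _ g_nz, of r] deg_hg by simp
  have sj: "j + k < n" if "j \<le> degree s" "s \<noteq> 0" for j
    using that s degree_sm[OF _ rho_nz, of s] deg_rho by simp
  have "(\<Sum>t<n. coeff (r \<star> g) t * coeff (s \<star> rho) t) =
     (\<Sum>i\<le>degree r. \<Sum>j\<le>degree s. coeff r i * coeff s j *
        (\<Sum>t<n. coeff (monom 1 i \<star> g) t * coeff (monom 1 j \<star> rho) t))"
    unfolding coeff_sm_expand[OF aut, of r] coeff_sm_expand[OF aut, of s] by (rule bilin_sum)
  also have "\<dots> = 0"
  proof (intro sum.neutral ballI)
    fix i j assume "i \<in> {..degree r}" "j \<in> {..degree s}"
    then have ij: "i \<le> degree r" "j \<le> degree s" by auto
    show "coeff r i * coeff s j * (\<Sum>t<n. coeff (monom 1 i \<star> g) t * coeff (monom 1 j \<star> rho) t) = 0"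
    proof (cases "r = 0 \<or> s = 0")
      case True then show ?thesis by auto
    next
      case False
      then show ?thesis using orth_mono[OF aut refl ri[OF ij(1)] sj[OF ij(2)] zero] False by simp
    qed
  qed
  finally show ?thesis .
qed

end




context sk6 begin

lemma part6:
  "dual_code n (sv \<theta> n a ` {sact \<theta> n a r (cls g) | r. True})
     = sv \<theta> n (inverse a) ` {sact \<theta> n (inverse a) r (scls \<theta> n (inverse a) rho) | r. True}"
proof -
  define C where "C = sv \<theta> n a ` {sact \<theta> n a r (cls g) | r. True}"
  define D where "D = sv \<theta> n (inverse a) ` {sact \<theta> n (inverse a) r (scls \<theta> n (inverse a) rho) | r. True}"
  let ?a' = "inverse a"
  have C_el: "\<exists>r'. c = vec n (coeff (r' \<star> g)) \<and> degree (r' \<star> g) < n" if "c \<in> C" for c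
  proof -
    obtain r where c: "c = sv \<theta> n a (sact \<theta> n a r (cls g))" using \<open>c \<in> C\<close> C_def by blast
    obtain r' where r': "red (r \<star> g) = r' \<star> g" using red_mult_w[OF fact] by blast
    have "c = vec n (coeff (r' \<star> g))" using c r' by (simp add: sact_scls sv_scls)
    moreover have "degree (r' \<star> g) < n" using red_deg r' by metis
    ultimately show ?thesis by blast
  qed
  have D_el: "\<exists>s'. y = vec n (coeff (s' \<star> rho)) \<and> degree (s' \<star> rho) < n" if "y \<in> D" for y
  proof -
    obtain r where y: "y = sv \<theta> n ?a' (sact \<theta> n ?a' r (scls \<theta> n ?a' rho))" using \<open>y \<in> D\<close> D_def by blast
    obtain s' where s': "sred \<theta> n ?a' (r \<star> rho) = s' \<star> rho"
      using skewq.red_mult_w[OF B ccB] by blast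
    have "y = vec n (coeff (s' \<star> rho))" using y s'
      by (simp add: skewq.sact_scls[OF B] skewq.sv_scls[OF B])
    moreover have "degree (s' \<star> rho) < n" using skewq.red_deg[OF B] s' by metis
    ultimately show ?thesis by blast
  qed
  have DC: "D \<subseteq> dual_code n C"
  proof
    fix y assume "y \<in> D"
    then obtain s' where y: "y = vec n (coeff (s' \<star> rho))" "degree (s' \<star> rho) < n" using D_el by blast
    show "y \<in> dual_code n C" unfolding dual_code_def
    proof (intro CollectI conjI ballI)
      show "y \<in> carrier_vec n" using y by simp
      fix c assume "c \<in> C"
      then obtain r' where c: "c = vec n (coeff (r' \<star> g))" "degree (r' \<star> g) < n" using C_el by blast
      have "c \<bullet> y = (\<Sum>t<n. coeff (r' \<star> g) t * coeff (s' \<star> rho) t)"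
        using c y by (simp add: scalar_prod_def atLeast0LessThan)
      also have "\<dots> = 0" by (rule orth_poly[OF c(2) y(2)])
      finally show "c \<bullet> y = 0" .
    qed
  qed
  have fin: "finite (dual_code n C)"
    by (rule finite_subset[OF _ finite_carrier_vec'[of n]]) (auto simp: dual_code_def)
  have dg: "degree g = n - k" using deg_hg by simp
  have xi_C: "vec n (coeff (monom 1 i \<star> g)) \<in> C" if "i < k" for i
  proof -
    have "degree (monom 1 i \<star> g) = i + (n - k)"
      using degree_sm[of "monom 1 i" g] g_nz dg by (simp add: degree_monom_eq)
    then have "degree (monom 1 i \<star> g) < n" using that deg_hg by simp
    then have eqv: "sv \<theta> n a (sact \<theta> n a (monom 1 i) (cls g)) = vec n (coeff (monom 1 i \<star> g))"
      by (simp add: sact_scls sv_scls red_id)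
    have mem: "sact \<theta> n a (monom 1 i) (cls g) \<in> {sact \<theta> n a r (cls g) | r. True}" by blast
    show ?thesis unfolding C_def by (rule image_eqI[where f="sv \<theta> n a", OF eqv[symmetric] mem])
  qed
  define phi where "phi = (\<lambda>y :: 'a vec. vec (n - k) (\<lambda>t. y $ (t + k)))"
  have phi_inj: "inj_on phi (dual_code n C)"
  proof (rule inj_onI)
    fix y1 y2 assume y1: "y1 \<in> dual_code n C" and y2: "y2 \<in> dual_code n C" and eq: "phi y1 = phi y2"
    have c1: "y1 \<in> carrier_vec n" and c2: "y2 \<in> carrier_vec n" using y1 y2 by (auto simp: dual_code_def)
    define d where "d = y1 - y2"
    have cd: "d \<in> carrier_vec n" using c1 c2 d_def by simp
    have dt: "d $ t = y1 $ t - y2 $ t" if "t < n" for t using that c1 c2 d_def by simp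
    have tail: "d $ t = 0" if "k \<le> t" "t < n" for t
    proof -
      have "phi y1 $ (t - k) = phi y2 $ (t - k)" using eq by simp
      moreover have "t - k + k = t" using that by simp
      ultimately have "y1 $ t = y2 $ t" using that by (simp add: phi_def)
      then show ?thesis using dt that by simp
    qed
    have orth_d: "(\<Sum>s<n. coeff (monom 1 i \<star> g) s * d $ s) = 0" if "i < k" for i
    proof -
      let ?v = "vec n (coeff (monom 1 i \<star> g))"
      have v: "?v \<in> C" using xi_C that by blast
      have "?v \<bullet> y1 = 0" "?v \<bullet> y2 = 0" using v y1 y2 by (auto simp: dual_code_def)
      then have "?v \<bullet> d = 0" unfolding d_def using c1 c2 by (simp add: scalar_prod_minus_distrib)
      then show ?thesis using cd by (simp add: scalar_prod_def atLeast0LessThan)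
    qed
    have main: "\<forall>t. t < n \<longrightarrow> k \<le> t + m \<longrightarrow> d $ t = 0" for m
    proof (induction m)
      case 0 then show ?case using tail by simp
    next
      case (Suc m)
      show ?case
      proof (intro allI impI)
        fix t assume t: "t < n" "k \<le> t + Suc m"
        show "d $ t = 0"
        proof (cases "k \<le> t + m")
          case True then show ?thesis using Suc.IH t by blast
        next
          case False
          then have tk: "t < k" "t + m + 1 = k" using t by auto
          have z: "coeff (monom 1 t \<star> g) s * d $ s = 0" if "s \<in> {..<n} - {t}" for s
          proof (cases "s < t")
            case True then show ?thesis by (simp add: coeff_sm_monom1)
          next
            case False
            then have "t < s" "s < n" using that by auto
            then have "d $ s = 0" using Suc.IH tk by auto
            then show ?thesis by simp
          qed
          have "0 = (\<Sum>s<n. coeff (monom 1 t \<star> g) s * d $ s)" using orth_d[OF tk(1)] by simp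
          also have "\<dots> = coeff (monom 1 t \<star> g) t * d $ t + (\<Sum>s\<in>{..<n} - {t}. coeff (monom 1 t \<star> g) s * d $ s)"
            using t by (subst sum.remove[of _ t]) auto
          also have "\<dots> = coeff (monom 1 t \<star> g) t * d $ t"
            using z by (subst sum.neutral) auto
          also have "\<dots> = (\<theta>^^t) (coeff g 0) * d $ t" by (simp add: coeff_sm_monom1)
          finally have "(\<theta>^^t) (coeff g 0) * d $ t = 0" by simp
          then show ?thesis using hg0 by simp
        qed
      qed
    qed
    show "y1 = y2"
    proof (rule eq_vecI)
      show "dim_vec y1 = dim_vec y2" using c1 c2 by simp
      fix t assume "t < dim_vec y2"
      then have "t < n" using c2 by simp
      then have "d $ t = 0" using main[of k] by simp
      then show "y1 $ t = y2 $ t" using dt \<open>t < n\<close> by simp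
    qed
  qed
  have phi_img: "phi ` dual_code n C \<subseteq> carrier_vec (n - k)" by (auto simp: phi_def)
  define P where "P = (\<lambda>w :: 'a vec. \<Sum>j<n - k. monom (w $ j) j)"
  define psi where "psi = (\<lambda>w. sv \<theta> n ?a' (sact \<theta> n ?a' (P w) (scls \<theta> n ?a' rho)))"
  have degP: "degree (P w \<star> rho) < n" for w
  proof (cases "P w = 0")
    case True then show ?thesis using npos by simp
  next
    case False
    then have "n - k \<noteq> 0" by (auto simp: P_def)
    then have "degree (P w) < n - k" unfolding P_def by (intro degree_sum_monom_lessThan) simp
    then show ?thesis using degree_sm[OF False rho_nz] deg_rho deg_hg by simp
  qed
  have psi_eq: "psi w = vec n (coeff (P w \<star> rho))" for w
    unfolding psi_def using degP[of w]
    by (simp add: skewq.sact_scls[OF B] skewq.sv_scls[OF B] skewq.red_id[OF B])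
  have psi_img: "psi ` carrier_vec (n - k) \<subseteq> D" unfolding D_def psi_def by blast
  have psi_inj: "inj_on psi (carrier_vec (n - k))"
  proof (rule inj_onI)
    fix w1 w2 assume w1: "w1 \<in> carrier_vec (n - k)" and w2: "w2 \<in> carrier_vec (n - k)"
      and eq: "psi w1 = psi w2"
    have "coeff (P w1 \<star> rho) t = coeff (P w2 \<star> rho) t" for t
    proof (cases "t < n")
      case True
      have "psi w1 $ t = psi w2 $ t" using eq by simp
      then show ?thesis using True unfolding psi_eq by simp
    next
      case False
      then show ?thesis using degP[of w1] degP[of w2] by (simp add: coeff_eq_0)
    qed
    then have "P w1 \<star> rho = P w2 \<star> rho" by (simp add: poly_eqI)
    then have PP: "P w1 = P w2" using sm_cancel_right[OF rho_nz] by blast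
    show "w1 = w2"
    proof (rule eq_vecI)
      show "dim_vec w1 = dim_vec w2" using w1 w2 by simp
      fix j assume "j < dim_vec w2"
      then have j: "j < n - k" using w2 by simp
      have "coeff (P w1) j = coeff (P w2) j" using PP by simp
      then show "w1 $ j = w2 $ j" using j by (simp add: P_def coeff_sum_monom_lessThan)
    qed
  qed
  have finD: "finite D" using finite_subset[OF DC fin] .
  have "card (dual_code n C) \<le> card (carrier_vec (n - k) :: 'a vec set)"
    by (rule card_inj_on_le[OF phi_inj phi_img finite_carrier_vec'])
  also have "\<dots> \<le> card D" by (rule card_inj_on_le[OF psi_inj psi_img finD])
  finally have "D = dual_code n C" using card_seteq[OF fin DC] by blast
  then show ?thesis unfolding C_def D_def by simp
qed

end

theorem theorem6p6:
  fixes \<theta> :: "'a::{finite,field} \<Rightarrow> 'a" and n :: nat and a :: 'a and g h :: "'a poly"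
  assumes aut: "field_aut \<theta>"
    and npos: "0 < n"
    and nid: "\<theta> ^^ n = id"
    and a0: "a \<noteq> 0"
    and afix: "\<theta> a = a"
    and fact: "xn_minus n a = skew_mult \<theta> h g"
  shows "
    ((\<forall>X\<in>SS \<theta> n a. \<forall>Y\<in>SS \<theta> n a.
        Mmat \<theta> n a (sadd \<theta> n a X Y) = Mmat \<theta> n a X + Mmat \<theta> n a Y
      \<and> Mmat \<theta> n a (smul \<theta> n a X Y) = Mmat \<theta> n a X * Mmat \<theta> n a Y)
     \<and> Mmat \<theta> n a (scls \<theta> n a 1) = 1\<^sub>m n
     \<and> inj_on (Mmat \<theta> n a) (SS \<theta> n a)) \<and>
    (xn_minus n a = skew_mult \<theta> g h) \<and>
    (Mmat \<theta> n a (scls \<theta> n a g) * Mmat \<theta> n a (scls \<theta> n a h) = 0\<^sub>m n n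
     \<and> Mmat \<theta> n a (scls \<theta> n a h) * Mmat \<theta> n a (scls \<theta> n a g) = 0\<^sub>m n n) \<and>
    ((\<forall>f. sact_r \<theta> n a (scls \<theta> n a f) h = scls \<theta> n a (skew_mult \<theta> f h))
     \<and> (\<forall>X\<in>SS \<theta> n a. \<forall>Y\<in>SS \<theta> n a. \<forall>r.
          sact_r \<theta> n a (sadd \<theta> n a X Y) h = sadd \<theta> n a (sact_r \<theta> n a X h) (sact_r \<theta> n a Y h)
        \<and> sact_r \<theta> n a (sact \<theta> n a r X) h = sact \<theta> n a r (sact_r \<theta> n a X h))
     \<and> {X \<in> SS \<theta> n a. sact_r \<theta> n a X h = scls \<theta> n a 0} = {sact \<theta> n a r (scls \<theta> n a g) | r. True}
     \<and> {sact \<theta> n a r (scls \<theta> n a g) | r. True}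
         = ann_l \<theta> n a {smul \<theta> n a (scls \<theta> n a h) T | T. T \<in> SS \<theta> n a}) \<and>
    ((\<forall>f. sact_r \<theta> n a (scls \<theta> n a f) g = scls \<theta> n a (skew_mult \<theta> f g))
     \<and> (\<forall>X\<in>SS \<theta> n a. \<forall>Y\<in>SS \<theta> n a. \<forall>r.
          sact_r \<theta> n a (sadd \<theta> n a X Y) g = sadd \<theta> n a (sact_r \<theta> n a X g) (sact_r \<theta> n a Y g)
        \<and> sact_r \<theta> n a (sact \<theta> n a r X) g = sact \<theta> n a r (sact_r \<theta> n a X g))
     \<and> {X \<in> SS \<theta> n a. sact_r \<theta> n a X g = scls \<theta> n a 0} = {sact \<theta> n a r (scls \<theta> n a h) | r. True}
     \<and> {sact \<theta> n a r (scls \<theta> n a h) | r. True}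
         = ann_l \<theta> n a {smul \<theta> n a (scls \<theta> n a g) T | T. T \<in> SS \<theta> n a}) \<and>
    ((\<forall>f. sact \<theta> n a h (scls \<theta> n a f) = scls \<theta> n a (skew_mult \<theta> h f))
     \<and> (\<forall>X\<in>SS \<theta> n a. \<forall>Y\<in>SS \<theta> n a. \<forall>r.
          sact \<theta> n a h (sadd \<theta> n a X Y) = sadd \<theta> n a (sact \<theta> n a h X) (sact \<theta> n a h Y)
        \<and> sact \<theta> n a h (sact_r \<theta> n a X r) = sact_r \<theta> n a (sact \<theta> n a h X) r)
     \<and> {X \<in> SS \<theta> n a. sact \<theta> n a h X = scls \<theta> n a 0}
         = {smul \<theta> n a (scls \<theta> n a g) T | T. T \<in> SS \<theta> n a}
     \<and> {smul \<theta> n a (scls \<theta> n a g) T | T. T \<in> SS \<theta> n a}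
         = ann_r \<theta> n a {smul \<theta> n a T (scls \<theta> n a h) | T. T \<in> SS \<theta> n a}) \<and>
    ((\<forall>f. sact \<theta> n a g (scls \<theta> n a f) = scls \<theta> n a (skew_mult \<theta> g f))
     \<and> (\<forall>X\<in>SS \<theta> n a. \<forall>Y\<in>SS \<theta> n a. \<forall>r.
          sact \<theta> n a g (sadd \<theta> n a X Y) = sadd \<theta> n a (sact \<theta> n a g X) (sact \<theta> n a g Y)
        \<and> sact \<theta> n a g (sact_r \<theta> n a X r) = sact_r \<theta> n a (sact \<theta> n a g X) r)
     \<and> {X \<in> SS \<theta> n a. sact \<theta> n a g X = scls \<theta> n a 0}
         = {smul \<theta> n a (scls \<theta> n a h) T | T. T \<in> SS \<theta> n a}
     \<and> {smul \<theta> n a (scls \<theta> n a h) T | T. T \<in> SS \<theta> n a}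
         = ann_r \<theta> n a {smul \<theta> n a T (scls \<theta> n a g) | T. T \<in> SS \<theta> n a}) \<and>
    (dual_code n (sv \<theta> n a ` {sact \<theta> n a r (scls \<theta> n a g) | r. True})
       = sv \<theta> n (inverse a) ` {sact \<theta> n (inverse a) r (scls \<theta> n (inverse a) (rho_l \<theta> h)) | r. True})"
  proof -
  interpret A: skewq \<theta> n a by unfold_locales (rule aut npos nid afix)+
  interpret S: sk6 \<theta> n a g h by unfold_locales (rule a0 fact)+
  have P1: "(\<forall>X\<in>SS \<theta> n a. \<forall>Y\<in>SS \<theta> n a.
        Mmat \<theta> n a (sadd \<theta> n a X Y) = Mmat \<theta> n a X + Mmat \<theta> n a Y
      \<and> Mmat \<theta> n a (smul \<theta> n a X Y) = Mmat \<theta> n a X * Mmat \<theta> n a Y)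
     \<and> Mmat \<theta> n a (scls \<theta> n a 1) = 1\<^sub>m n
     \<and> inj_on (Mmat \<theta> n a) (SS \<theta> n a)" by (rule A.part1)
  have P2: "xn_minus n a = skew_mult \<theta> g h" by (rule S.gh)
  have cc0: "scls \<theta> n a (xn_minus n a) = scls \<theta> n a 0"
    using A.cls_mult_cc[of 1] by simp
  have P3: "Mmat \<theta> n a (scls \<theta> n a g) * Mmat \<theta> n a (scls \<theta> n a h) = 0\<^sub>m n n
     \<and> Mmat \<theta> n a (scls \<theta> n a h) * Mmat \<theta> n a (scls \<theta> n a g) = 0\<^sub>m n n"
    by (simp add: A.Mmat_mult[symmetric] P2[symmetric] fact[symmetric] cc0 A.Mmat_zero)
  note P4h = A.part4[OF P2] and P4g = A.part4[OF fact]
  note P5h = A.part5[OF fact] and P5g = A.part5[OF P2]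
  note P6 = S.part6
  show ?thesis
    by (rule conjI[OF P1 conjI[OF P2 conjI[OF P3 conjI[OF P4h conjI[OF P4g conjI[OF P5h conjI[OF P5g P6]]]]]]])
qed

end
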